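(* Let $\{G_n\}$ be a sequence of motif-based graphs satisfying internal regularity (there is $S_{\max}<\infty$ with $v(M)\le S_{\max}$ for all motifs $M$) and external regularity (the external graphs $G_n^{ext}$ on $n$ vertices have bounded average degree and converge in probability in the local weak sense to some $\mu^{ext}$). Let $M_1,\dots,M_n$ be the motifs of $G_n$ and $\mathbb E_n[v(M)]=\frac1n\sum_{i=1}^n v(M_i)$. Then there exists $\bar v<\infty$ such that $\mathbb E_n[v(M)]\to\bar v$ in probability, with respect to the randomness of the external graph and of the motif assignment.
   Context: A motif is a pair $M=(F,(d_v^{ext})_{v\in V(F)})$ with $F$ a finite connected simple graph and external degrees $d_v^{ext}$; $d(M)=\sum_v d_v^{ext}$, $v(M)=|V(F)|$. Given distributions $\mathcal M_d$ on motifs with $d(M)=d$ and an external graph $G_n^{ext}$ on $n$ vertices, $G_n$ is obtained by independently replacing each vertex of degree $d$ of $G_n^{ext}$ by a motif drawn from $\mathcal M_d$, with vertex $v$ of $F$ receiving $d_v^{ext}$ of the external edges. $\mathcal G_*$: rooted connected locally finite graphs up to root-preserving isomorphism; local weak convergence in probability to $\mu$: $\frac1{|V(H_n)|}\sum_vf(H_n,v)\to\int f\,d\mu$ in probability for every bounded $f$ depending only on a bounded-radius ball around the root. *)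

theory Defs
  imports "HOL-Probability.Probability"
begin

text \<open>A (possibly infinite) graph on vertex type nat is an edge predicate.
  A rooted graph is a pair (E, o); only the connected component of the root o matters.\<close>

type_synonym rgraph = "(nat \<Rightarrow> nat \<Rightarrow> bool) \<times> nat"

definition simple_lf_graph :: "(nat \<Rightarrow> nat \<Rightarrow> bool) \<Rightarrow> bool" where
  "simple_lf_graph E \<longleftrightarrow> (\<forall>u v. E u v \<longrightarrow> E v u) \<and> (\<forall>v. \<not> E v v) \<and> (\<forall>v. finite {u. E v u})"

text \<open>Representatives of elements of G_* (rooted, locally finite graphs).\<close>
definition RG :: "rgraph set" where
  "RG = {(E, r). simple_lf_graph E}"

definition ball_verts :: "nat \<Rightarrow> rgraph \<Rightarrow> nat set" where
  "ball_verts r G = {v. \<exists>k\<le>r. (fst G ^^ k) (snd G) v}"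

definition ball_iso :: "nat \<Rightarrow> rgraph \<Rightarrow> rgraph \<Rightarrow> bool" where
  "ball_iso r G H \<longleftrightarrow> (\<exists>\<phi>. bij_betw \<phi> (ball_verts r G) (ball_verts r H) \<and> \<phi> (snd G) = snd H \<and>
      (\<forall>u\<in>ball_verts r G. \<forall>v\<in>ball_verts r G. fst G u v \<longleftrightarrow> fst H (\<phi> u) (\<phi> v)))"

definition local_fun :: "(rgraph \<Rightarrow> real) \<Rightarrow> bool" where
  "local_fun f \<longleftrightarrow> (\<exists>r. \<forall>G\<in>RG. \<forall>H\<in>RG. ball_iso r G H \<longrightarrow> f G = f H)"

definition bounded_fun :: "(rgraph \<Rightarrow> real) \<Rightarrow> bool" where
  "bounded_fun f \<longleftrightarrow> (\<exists>B. \<forall>x. \<bar>f x\<bar> \<le> B)"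

definition RG_sets :: "rgraph set set" where
  "RG_sets = sigma_sets RG {{H\<in>RG. ball_iso r G H} | r G. G \<in> RG}"

definition rooted_graph_prob :: "rgraph measure \<Rightarrow> bool" where
  "rooted_graph_prob \<mu> \<longleftrightarrow> prob_space \<mu> \<and> space \<mu> = RG \<and> sets \<mu> = RG_sets"

definition fin_graph :: "nat \<Rightarrow> (nat \<Rightarrow> nat \<Rightarrow> bool) \<Rightarrow> bool" where
  "fin_graph n E \<longleftrightarrow> (\<forall>u v. E u v \<longrightarrow> u < n \<and> v < n \<and> E v u) \<and> (\<forall>v. \<not> E v v)"

definition deg :: "(nat \<Rightarrow> nat \<Rightarrow> bool) \<Rightarrow> nat \<Rightarrow> nat" where
  "deg E v = card {u. E v u}"

definition lwc_in_prob :: "(nat \<Rightarrow> (nat \<Rightarrow> nat \<Rightarrow> bool) pmf) \<Rightarrow> rgraph measure \<Rightarrow> bool" where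
  "lwc_in_prob Gn \<mu> \<longleftrightarrow>
     (\<forall>f. local_fun f \<and> bounded_fun f \<and> f \<in> borel_measurable \<mu> \<longrightarrow>
        (\<forall>\<epsilon>>0. (\<lambda>n. measure_pmf.prob (Gn n)
            {E. \<bar>(\<Sum>v<n. f (E, v)) / real n - (\<integral>x. f x \<partial>\<mu>)\<bar> > \<epsilon>}) \<longlonglongrightarrow> 0))"

record motif =
  mV :: "nat set"
  mE :: "nat \<Rightarrow> nat \<Rightarrow> bool"
  mdext :: "nat \<Rightarrow> nat"

text \<open>F = (mV, mE) a finite connected simple graph (nonempty), with external degrees mdext.\<close>
definition is_motif :: "motif \<Rightarrow> bool" where
  "is_motif M \<longleftrightarrow> finite (mV M) \<and> mV M \<noteq> {} \<and>
     (\<forall>u v. mE M u v \<longrightarrow> u \<in> mV M \<and> v \<in> mV M \<and> mE M v u) \<and> (\<forall>v. \<not> mE M v v) \<and>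
     (\<forall>u\<in>mV M. \<forall>v\<in>mV M. (mE M)\<^sup>*\<^sup>* u v)"

definition motif_d :: "motif \<Rightarrow> nat" where
  "motif_d M = (\<Sum>v\<in>mV M. mdext M v)"

definition motif_v :: "motif \<Rightarrow> nat" where
  "motif_v M = card (mV M)"

definition motif_law ::
  "(nat \<Rightarrow> (nat \<Rightarrow> nat \<Rightarrow> bool) pmf) \<Rightarrow> (nat \<Rightarrow> motif pmf) \<Rightarrow> nat \<Rightarrow> ((nat \<Rightarrow> nat \<Rightarrow> bool) \<times> (nat \<Rightarrow> motif)) pmf" where
  "motif_law Gn Md n =
     bind_pmf (Gn n) (\<lambda>E. map_pmf (\<lambda>m. (E, m)) (Pi_pmf {..<n} undefined (\<lambda>i. Md (deg E i))))"

end

theory Submission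
  imports Defs "HOL-Real_Asymp.Real_Asymp"
begin


lemma ball_verts_1: "ball_verts 1 G = insert (snd G) {u. fst G (snd G) u}"
proof -
  have "(\<exists>k\<le>1. (fst G ^^ k) (snd G) v) \<longleftrightarrow> v = snd G \<or> fst G (snd G) v" for v
  proof
    assume "\<exists>k\<le>1. (fst G ^^ k) (snd G) v"
    then obtain k where k: "k \<le> 1" "(fst G ^^ k) (snd G) v" by blast
    then have "k = 0 \<or> k = 1" by linarith
    then show "v = snd G \<or> fst G (snd G) v" using k(2) by (elim disjE) (simp_all add: eq_OO)
  next
    assume "v = snd G \<or> fst G (snd G) v"
    then show "\<exists>k\<le>1. (fst G ^^ k) (snd G) v"
    proof
      assume "v = snd G" then show ?thesis by (intro exI[of _ 0]) simp
    next
      assume "fst G (snd G) v" then show ?thesis by (intro exI[of _ 1]) (simp add: eq_OO)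
    qed
  qed
  then show ?thesis unfolding ball_verts_def by blast
qed

lemma ball_verts_Suc0: "ball_verts (Suc 0) G = insert (snd G) {u. fst G (snd G) u}"
  using ball_verts_1 by simp

lemma ball_iso_deg:
  assumes "ball_iso 1 G H"
  shows "deg (fst G) (snd G) = deg (fst H) (snd H)"
proof -
  from assms obtain \<phi> where all: "bij_betw \<phi> (ball_verts 1 G) (ball_verts 1 H) \<and> \<phi> (snd G) = snd H \<and>
      (\<forall>u\<in>ball_verts 1 G. \<forall>v\<in>ball_verts 1 G. fst G u v \<longleftrightarrow> fst H (\<phi> u) (\<phi> v))"
    unfolding ball_iso_def by (elim exE) (rule that)
  have b: "bij_betw \<phi> (ball_verts 1 G) (ball_verts 1 H)" using all by (rule conjunct1)
  have r: "\<phi> (snd G) = snd H" using all by simp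
  have e: "\<forall>u\<in>ball_verts 1 G. \<forall>v\<in>ball_verts 1 G. fst G u v \<longleftrightarrow> fst H (\<phi> u) (\<phi> v)"
    using all[THEN conjunct2, THEN conjunct2] .
  let ?NG = "{u. fst G (snd G) u}" and ?NH = "{u. fst H (snd H) u}"
  have sub: "?NG \<subseteq> ball_verts 1 G" unfolding ball_verts_1 by blast
  have inj: "inj_on \<phi> ?NG" using inj_on_subset[OF bij_betw_imp_inj_on[OF b] sub] .
  have rootG: "snd G \<in> ball_verts 1 G" unfolding ball_verts_1 by blast
  have "\<phi> ` ?NG = ?NH"
  proof
    show "\<phi> ` ?NG \<subseteq> ?NH"
    proof
      fix x assume "x \<in> \<phi> ` ?NG"
      then obtain u where u: "u \<in> ?NG" "x = \<phi> u" by blast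
      have "u \<in> ball_verts 1 G" using u(1) sub by (rule subsetD[rotated])
      then have "fst G (snd G) u \<longleftrightarrow> fst H (\<phi> (snd G)) (\<phi> u)" using e rootG by blast
      then show "x \<in> ?NH" using u r by simp
    qed
  next
    show "?NH \<subseteq> \<phi> ` ?NG"
    proof
      fix w assume w: "w \<in> ?NH"
      then have "w \<in> ball_verts 1 H" unfolding ball_verts_1 by blast
      then have "w \<in> \<phi> ` ball_verts 1 G" using b by (simp add: bij_betw_def)
      then obtain u where u: "u \<in> ball_verts 1 G" "w = \<phi> u" by blast
      then have "fst G (snd G) u \<longleftrightarrow> fst H (\<phi> (snd G)) (\<phi> u)" using e rootG by blast
      then have "fst G (snd G) u" using w u r by simp
      then show "w \<in> \<phi> ` ?NG" using u by blast
    qed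
  qed
  then show ?thesis unfolding deg_def using card_image[OF inj] by simp
qed

lemma canon_exists:
  assumes G: "G \<in> RG"
  shows "\<exists>E'. (\<forall>u v. E' u v \<longrightarrow> u \<le> deg (fst G) (snd G) \<and> v \<le> deg (fst G) (snd G))
     \<and> (E', 0) \<in> RG \<and> ball_iso 1 (E', 0) G"
proof -
  obtain E r where Gd: "G = (E, r)" by (cases G)
  have sl: "simple_lf_graph E" using G Gd by (simp add: RG_def)
  define N where "N = {u. E r u}"
  define d where "d = card N"
  have finN: "finite N" using sl by (simp add: simple_lf_graph_def N_def)
  have rN: "r \<notin> N" using sl by (simp add: simple_lf_graph_def N_def)
  obtain g where g: "bij_betw g {1..d} N" using ex_bij_betw_nat_finite_1[OF finN] d_def by blast
  define \<psi> where "\<psi> = g(0 := r)"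
  have g': "bij_betw \<psi> {1..d} N"
    using g unfolding \<psi>_def by (rule bij_betw_cong[THEN iffD1, rotated]) auto
  have dom: "{0..d} = insert 0 {1..d}" by auto
  have bij: "bij_betw \<psi> {0..d} (insert r N)"
  proof -
    have "bij_betw \<psi> ({1..d} \<union> {0}) (N \<union> {\<psi> 0})"
      using g' rN by (intro notIn_Un_bij_betw) (auto simp: \<psi>_def)
    moreover have "{1..d} \<union> {0} = {0..d}" "N \<union> {\<psi> 0} = insert r N" by (auto simp: \<psi>_def)
    ultimately show ?thesis by simp
  qed
  define E' where "E' = (\<lambda>u v. u \<le> d \<and> v \<le> d \<and> E (\<psi> u) (\<psi> v))"
  have sym: "\<And>u v. E u v \<Longrightarrow> E v u" and irr: "\<And>v. \<not> E v v" using sl by (auto simp: simple_lf_graph_def)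
  have "simple_lf_graph E'"
    unfolding simple_lf_graph_def E'_def
    using sym irr by (auto intro: finite_subset[of _ "{..d}"])
  then have RG': "(E', 0) \<in> RG" by (simp add: RG_def)
  have bv: "ball_verts 1 (E', 0) = {0..d}"
  proof -
    have "{v. E' 0 v} = {1..d}"
    proof
      show "{v. E' 0 v} \<subseteq> {1..d}"
      proof
        fix v assume "v \<in> {v. E' 0 v}"
        then have "v \<le> d" "E r (\<psi> v)" by (auto simp: E'_def \<psi>_def)
        moreover have "v \<noteq> 0"
        proof
          assume "v = 0" then have "E r r" using \<open>E r (\<psi> v)\<close> by (simp add: \<psi>_def)
          then show False using irr by blast
        qed
        ultimately show "v \<in> {1..d}" by simp
      qed
      show "{1..d} \<subseteq> {v. E' 0 v}"
      proof
        fix v assume v: "v \<in> {1..d}"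
        then have "\<psi> v \<in> N" using g' by (auto simp: bij_betw_def)
        then show "v \<in> {v. E' 0 v}" using v by (simp add: E'_def N_def \<psi>_def)
      qed
    qed
    then have "ball_verts 1 (E', 0) = insert 0 {1..d}" by (simp only: ball_verts_1 fst_conv snd_conv)
    also have "insert 0 {1..d} = {0..d}" by auto
    finally show ?thesis .
  qed
  have bvG: "ball_verts 1 G = insert r N" unfolding ball_verts_1 Gd N_def by simp
  have "ball_iso 1 (E', 0) G"
    unfolding ball_iso_def bv bvG
  proof (intro exI[of _ \<psi>] conjI ballI)
    show "bij_betw \<psi> {0..d} (insert r N)" by (rule bij)
    show "\<psi> (snd (E', 0::nat)) = snd G" by (simp add: Gd \<psi>_def)
    fix u v assume "u \<in> {0..d}" "v \<in> {0..d}"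
    then show "fst (E', 0::nat) u v = fst G (\<psi> u) (\<psi> v)" by (simp add: Gd E'_def)
  qed
  moreover have deq: "deg (fst G) (snd G) = d" by (simp add: Gd deg_def d_def N_def)
  moreover have "\<forall>u v. E' u v \<longrightarrow> u \<le> d \<and> v \<le> d" unfolding E'_def by blast
  ultimately have "(\<forall>u v. E' u v \<longrightarrow> u \<le> d \<and> v \<le> d) \<and> (E', 0) \<in> RG \<and> ball_iso 1 (E', 0) G"
    using RG' by blast
  then show ?thesis unfolding deq by (rule exI[where x=E'])
qed



lemma deg_sets:
  assumes "rooted_graph_prob \<mu>"
  shows "{G\<in>RG. deg (fst G) (snd G) = d} \<in> sets \<mu>"
proof -
  have sm: "sets \<mu> = RG_sets" using assms by (simp add: rooted_graph_prob_def)
  define Can where "Can = {E'::nat\<Rightarrow>nat\<Rightarrow>bool. (\<forall>u v. E' u v \<longrightarrow> u \<le> d \<and> v \<le> d) \<and> (E', 0) \<in> RG \<and> deg E' 0 = d}"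
  have "Can \<subseteq> (\<lambda>S u v. (u, v) \<in> S) ` Pow ({..d} \<times> {..d})"
  proof
    fix E' assume "E' \<in> Can"
    then have h: "\<forall>u v. E' u v \<longrightarrow> u \<le> d \<and> v \<le> d" by (simp add: Can_def)
    have "E' = (\<lambda>u v. (u, v) \<in> {(u, v). E' u v})" by simp
    moreover have "{(u, v). E' u v} \<in> Pow ({..d} \<times> {..d})" using h by auto
    ultimately show "E' \<in> (\<lambda>S u v. (u, v) \<in> S) ` Pow ({..d} \<times> {..d})" by (rule image_eqI)
  qed
  then have finC: "finite Can" by (rule finite_subset) simp
  have eq: "{G\<in>RG. deg (fst G) (snd G) = d} = (\<Union>E'\<in>Can. {H\<in>RG. ball_iso 1 (E', 0) H})"
  proof
    show "{G\<in>RG. deg (fst G) (snd G) = d} \<subseteq> (\<Union>E'\<in>Can. {H\<in>RG. ball_iso 1 (E', 0) H})"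
    proof
      fix G assume G: "G \<in> {G\<in>RG. deg (fst G) (snd G) = d}"
      then have GR: "G \<in> RG" and dG: "deg (fst G) (snd G) = d" by auto
      obtain E' where E': "\<forall>u v. E' u v \<longrightarrow> u \<le> deg (fst G) (snd G) \<and> v \<le> deg (fst G) (snd G)"
        "(E', 0) \<in> RG" "ball_iso 1 (E', 0) G"
        using canon_exists[OF GR] by blast
      have "deg E' 0 = d" using ball_iso_deg[OF E'(3)] dG by simp
      then have "E' \<in> Can" using E' dG by (simp add: Can_def)
      then show "G \<in> (\<Union>E'\<in>Can. {H\<in>RG. ball_iso 1 (E', 0) H})" using GR E'(3) by blast
    qed
  next
    show "(\<Union>E'\<in>Can. {H\<in>RG. ball_iso 1 (E', 0) H}) \<subseteq> {G\<in>RG. deg (fst G) (snd G) = d}"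
    proof
      fix H assume "H \<in> (\<Union>E'\<in>Can. {H\<in>RG. ball_iso 1 (E', 0) H})"
      then obtain E' where "E' \<in> Can" "H \<in> RG" "ball_iso 1 (E', 0) H" by blast
      then show "H \<in> {G\<in>RG. deg (fst G) (snd G) = d}"
        using ball_iso_deg[of "(E', 0)" H] by (simp add: Can_def)
    qed
  qed
  have "\<forall>E'\<in>Can. {H\<in>RG. ball_iso 1 (E', 0) H} \<in> sets \<mu>"
  proof
    fix E' assume "E' \<in> Can"
    then have "(E', 0) \<in> RG" by (simp add: Can_def)
    then have "{H\<in>RG. ball_iso 1 (E', 0) H} \<in> {{H\<in>RG. ball_iso r G H} | r G. G \<in> RG}" by blast
    then show "{H\<in>RG. ball_iso 1 (E', 0) H} \<in> sets \<mu>" unfolding sm RG_sets_def by (rule sigma_sets.Basic)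
  qed
  then show ?thesis unfolding eq by (intro sets.finite_UN finC) auto
qed

lemma fdeg_measurable:
  assumes "rooted_graph_prob \<mu>"
  shows "(\<lambda>G. deg (fst G) (snd G)) \<in> measurable \<mu> (count_space UNIV)"
proof -
  have sp: "space \<mu> = RG" using assms by (simp add: rooted_graph_prob_def)
  show ?thesis
    unfolding measurable_count_space_eq2_countable
  proof (intro conjI ballI)
    fix a :: nat
    have "(\<lambda>G. deg (fst G) (snd G)) -` {a} \<inter> space \<mu> = {G\<in>RG. deg (fst G) (snd G) = a}"
      unfolding sp by auto
    then show "(\<lambda>G. deg (fst G) (snd G)) -` {a} \<inter> space \<mu> \<in> sets \<mu>" using deg_sets[OF assms] by simp
  qed auto
qed

lemma comp_measurable:
  assumes "rooted_graph_prob \<mu>"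
  shows "(\<lambda>G. h (deg (fst G) (snd G)) :: real) \<in> borel_measurable \<mu>"
  using measurable_compose[OF fdeg_measurable[OF assms], of h borel] by simp



definition mexp :: "(nat \<Rightarrow> motif pmf) \<Rightarrow> nat \<Rightarrow> real" where
  "mexp Md d = measure_pmf.expectation (Md d) (\<lambda>M. real (motif_v M))"

lemma mexp_bounds:
  assumes "\<And>M. M \<in> set_pmf (Md d) \<Longrightarrow> motif_v M \<le> S"
  shows "0 \<le> mexp Md d \<and> mexp Md d \<le> real S"
proof
  show "0 \<le> mexp Md d" unfolding mexp_def by (rule integral_nonneg_AE) simp
  have int: "integrable (measure_pmf (Md d)) (\<lambda>M. real (motif_v M))"
    by (rule measure_pmf.integrable_const_bound[where B="real S"]) (auto simp: AE_measure_pmf_iff assms)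
  show "mexp Md d \<le> real S" unfolding mexp_def
    by (rule measure_pmf.integral_le_const[OF int]) (auto simp: AE_measure_pmf_iff assms)
qed

lemma hoeff:
  assumes bnd: "\<And>d M. M \<in> set_pmf (Md d) \<Longrightarrow> motif_v M \<le> S"
    and n: "n > 0" and t: "t \<ge> 0"
  shows "measure_pmf.prob (Pi_pmf {..<n} undefined (\<lambda>i. Md (deg E i)))
     {m. \<bar>(\<Sum>i<n. real (motif_v (m i))) - (\<Sum>i<n. mexp Md (deg E i))\<bar> \<ge> t}
     \<le> 2 * exp (-2 * t\<^sup>2 / (real n * (real S + 1)\<^sup>2))"
proof -
  let ?P = "Pi_pmf {..<n} undefined (\<lambda>i. Md (deg E i))"
  let ?X = "\<lambda>i m. real (motif_v (m i))"
  have ex: "measure_pmf.expectation ?P (?X i) = mexp Md (deg E i)" if "i < n" for i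
  proof -
    have "measure_pmf.expectation ?P (?X i) = measure_pmf.expectation (map_pmf (\<lambda>f. f i) ?P) (\<lambda>M. real (motif_v M))"
      by simp
    also have "map_pmf (\<lambda>f. f i) ?P = Md (deg E i)" using that by (simp add: Pi_pmf_component)
    finally show ?thesis by (simp add: mexp_def)
  qed
  interpret H: Hoeffding_ineq "measure_pmf ?P" "{..<n}" ?X "\<lambda>_. -1" "\<lambda>_. real S" "\<Sum>i<n. measure_pmf.expectation ?P (?X i)"
  proof (unfold_locales)
    show "finite {..<n}" by simp
    show "prob_space.indep_vars (measure_pmf ?P) (\<lambda>_. borel) ?X {..<n}"
      using prob_space.indep_vars_compose2[OF measure_pmf.prob_space_axioms indep_vars_Pi_pmf[of "{..<n}" undefined "\<lambda>i. Md (deg E i)"],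
          of "\<lambda>i M. real (motif_v M)" "\<lambda>_. borel"] by simp
    fix i assume i: "i \<in> {..<n}"
    have "m i \<in> set_pmf (Md (deg E i))" if "m \<in> set_pmf ?P" for m
      using that i by (auto simp: set_Pi_pmf PiE_dflt_def)
    then show "AE x in measure_pmf ?P. ?X i x \<in> {-1..real S}"
      by (auto simp: AE_measure_pmf_iff intro: bnd)
  qed simp
  have pos: "(\<Sum>i<n. (real S - -1)\<^sup>2) > 0" using n by (simp add: add_pos_pos)
  have "measure_pmf.prob ?P {x \<in> space (measure_pmf ?P). \<bar>(\<Sum>i<n. ?X i x) - (\<Sum>i<n. measure_pmf.expectation ?P (?X i))\<bar> \<ge> t}
     \<le> 2 * exp (-2 * t\<^sup>2 / (\<Sum>i<n. (real S - -1)\<^sup>2))"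
    by (rule H.Hoeffding_ineq_abs_ge[OF t pos])
  moreover have "(\<Sum>i<n. measure_pmf.expectation ?P (?X i)) = (\<Sum>i<n. mexp Md (deg E i))"
    using ex by simp
  moreover have "(\<Sum>i<n. (real S - -1)\<^sup>2) = real n * (real S + 1)\<^sup>2" by simp
  ultimately show ?thesis by simp
qed



lemma exp_aux: "(x::real) > 0 \<Longrightarrow> a > 0 \<Longrightarrow> -2 * (x * e / 2)\<^sup>2 / (x * a) = - ((e\<^sup>2 / (2 * a)) * x)"
  by (simp add: field_simps power2_eq_square)

lemma per_E:
  assumes bnd: "\<And>d M. M \<in> set_pmf (Md d) \<Longrightarrow> motif_v M \<le> S"
    and n: "n > 0" and eps: "\<epsilon> > 0"
  shows "measure_pmf.prob (map_pmf (\<lambda>m. (E, m)) (Pi_pmf {..<n} undefined (\<lambda>i. Md (deg E i))))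
      {(E, m). \<bar>(\<Sum>i<n. real (motif_v (m i))) / real n - vbar\<bar> > \<epsilon>}
    \<le> 2 * exp (- ((\<epsilon>\<^sup>2 / (2 * (real S + 1)\<^sup>2)) * real n)) +
       indicator {E. \<bar>(\<Sum>v<n. mexp Md (deg E v)) / real n - vbar\<bar> > \<epsilon>/2} E"
  (is "?L \<le> ?hb + indicator ?B E")
proof -
  let ?P = "Pi_pmf {..<n} undefined (\<lambda>i. Md (deg E i))"
  have L: "?L = measure_pmf.prob ?P {m. \<bar>(\<Sum>i<n. real (motif_v (m i))) / real n - vbar\<bar> > \<epsilon>}"
    by (simp add: vimage_def)
  have hb0: "0 \<le> ?hb" by simp
  show ?thesis
  proof (cases "E \<in> ?B")
    case True
    have "?L \<le> 1" by simp
    moreover have "indicator ?B E = (1::real)" using True by simp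
    ultimately show ?thesis using hb0 by linarith
  next
    case False
    let ?Y = "\<Sum>v<n. mexp Md (deg E v)"
    have nr: "real n > 0" using n by simp
    have Yb: "\<bar>?Y / real n - vbar\<bar> \<le> \<epsilon>/2" using False by simp
    have sub: "{m. \<bar>(\<Sum>i<n. real (motif_v (m i))) / real n - vbar\<bar> > \<epsilon>}
       \<subseteq> {m. \<bar>(\<Sum>i<n. real (motif_v (m i))) - ?Y\<bar> \<ge> real n * \<epsilon> / 2}"
    proof
      fix m assume "m \<in> {m. \<bar>(\<Sum>i<n. real (motif_v (m i))) / real n - vbar\<bar> > \<epsilon>}"
      then have X: "\<bar>(\<Sum>i<n. real (motif_v (m i))) / real n - vbar\<bar> > \<epsilon>" by simp
      define X where "X = (\<Sum>i<n. real (motif_v (m i)))"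
      have "\<bar>X / real n - ?Y / real n\<bar> > \<epsilon> / 2" using X Yb unfolding X_def by linarith
      moreover have "X / real n - ?Y / real n = (X - ?Y) / real n" by (simp add: diff_divide_distrib)
      ultimately have "\<bar>X - ?Y\<bar> / real n > \<epsilon> / 2" by simp
      then have "\<bar>X - ?Y\<bar> > \<epsilon> / 2 * real n" using nr by (simp add: pos_less_divide_eq)
      then show "m \<in> {m. \<bar>(\<Sum>i<n. real (motif_v (m i))) - ?Y\<bar> \<ge> real n * \<epsilon> / 2}"
        unfolding X_def by (simp add: mult.commute)
    qed
    have "?L \<le> measure_pmf.prob ?P {m. \<bar>(\<Sum>i<n. real (motif_v (m i))) - ?Y\<bar> \<ge> real n * \<epsilon> / 2}"
      unfolding L by (rule measure_pmf.finite_measure_mono[OF sub]) simp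
    also have "\<dots> \<le> 2 * exp (-2 * (real n * \<epsilon> / 2)\<^sup>2 / (real n * (real S + 1)\<^sup>2))"
      using hoeff[where Md=Md and S=S and E=E and n=n and t="real n * \<epsilon> / 2"] bnd n eps by simp
    also have "-2 * (real n * \<epsilon> / 2)\<^sup>2 / (real n * (real S + 1)\<^sup>2) = - ((\<epsilon>\<^sup>2 / (2 * (real S + 1)\<^sup>2)) * real n)"
      using exp_aux[OF nr, of "(real S + 1)\<^sup>2" \<epsilon>] by simp
    finally show ?thesis using False by simp
  qed
qed

lemma bind_bound:
  assumes "\<And>x. measure_pmf.prob (K x) A \<le> h + indicator B x" and "h \<ge> 0"
  shows "measure_pmf.prob (bind_pmf M K) A \<le> h + measure_pmf.prob M B"
proof -
  have "ennreal (measure_pmf.prob (bind_pmf M K) A) = emeasure (measure_pmf (bind_pmf M K)) A"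
    by (simp add: measure_pmf.emeasure_eq_measure)
  also have "\<dots> = (\<integral>\<^sup>+x. emeasure (measure_pmf (K x)) A \<partial>measure_pmf M)" by simp
  also have "\<dots> \<le> (\<integral>\<^sup>+x. (ennreal h + indicator B x) \<partial>measure_pmf M)"
  proof (rule nn_integral_mono)
    fix x
    have "emeasure (measure_pmf (K x)) A = ennreal (measure_pmf.prob (K x) A)"
      by (simp add: measure_pmf.emeasure_eq_measure)
    also have "\<dots> \<le> ennreal (h + indicator B x)" using assms(1) by (rule ennreal_leI)
    also have "\<dots> = ennreal h + indicator B x" using assms(2) by (simp add: ennreal_plus ennreal_indicator)
    finally show "emeasure (measure_pmf (K x)) A \<le> ennreal h + indicator B x" .
  qed
  also have "\<dots> = ennreal h + emeasure (measure_pmf M) B"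
    by (subst nn_integral_add) (auto simp: measure_pmf.emeasure_space_1)
  also have "\<dots> = ennreal (h + measure_pmf.prob M B)"
    using assms(2) by (simp add: measure_pmf.emeasure_eq_measure ennreal_plus)
  finally have "ennreal (measure_pmf.prob (bind_pmf M K) A) \<le> ennreal (h + measure_pmf.prob M B)" .
  moreover have "0 \<le> h + measure_pmf.prob M B" using assms(2) by simp
  ultimately show ?thesis using ennreal_le_iff by blast
qed

lemma exp_lim:
  assumes "c > 0"
  shows "(\<lambda>n. 2 * exp (- (c * real n))) \<longlonglongrightarrow> 0"
  using assms by real_asymp



theorem proposition3p1:
  fixes Gext :: "nat \<Rightarrow> (nat \<Rightarrow> nat \<Rightarrow> bool) pmf"
    and Md :: "nat \<Rightarrow> motif pmf"
    and \<mu>ext :: "rgraph measure"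
    and Smax :: nat
    and C :: real
  assumes motifs: "\<And>d M. M \<in> set_pmf (Md d) \<Longrightarrow> is_motif M \<and> motif_d M = d"
    and internal_reg: "\<And>d M. M \<in> set_pmf (Md d) \<Longrightarrow> motif_v M \<le> Smax"
    and ext_graphs: "\<And>n E. E \<in> set_pmf (Gext n) \<Longrightarrow> fin_graph n E"
    and avg_deg: "\<And>n E. E \<in> set_pmf (Gext n) \<Longrightarrow> (\<Sum>v<n. real (deg E v)) / real n \<le> C"
    and limit: "rooted_graph_prob \<mu>ext"
    and lwc: "lwc_in_prob Gext \<mu>ext"
  shows "\<exists>vbar::real. \<forall>\<epsilon>>0.
           (\<lambda>n. measure_pmf.prob (motif_law Gext Md n)
              {(E, m). \<bar>(\<Sum>i<n. real (motif_v (m i))) / real n - vbar\<bar> > \<epsilon>}) \<longlonglongrightarrow> 0"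
proof -
  define f where "f = (\<lambda>G::rgraph. mexp Md (deg (fst G) (snd G)))"
  have fb: "bounded_fun f" unfolding bounded_fun_def
  proof (intro exI allI)
    fix x
    have "0 \<le> f x \<and> f x \<le> real Smax" unfolding f_def by (rule mexp_bounds) (rule internal_reg)
    then show "\<bar>f x\<bar> \<le> real Smax" by simp
  qed
  have fl: "local_fun f" unfolding local_fun_def
  proof (intro exI[of _ 1] ballI impI)
    fix G H assume "ball_iso 1 G H"
    then show "f G = f H" unfolding f_def using ball_iso_deg by simp
  qed
  have fm: "f \<in> borel_measurable \<mu>ext" unfolding f_def by (rule comp_measurable[OF limit])
  have L: "\<forall>\<epsilon>>0. (\<lambda>n. measure_pmf.prob (Gext n)
            {E. \<bar>(\<Sum>v<n. f (E, v)) / real n - (\<integral>x. f x \<partial>\<mu>ext)\<bar> > \<epsilon>}) \<longlonglongrightarrow> 0"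
    using lwc fb fl fm unfolding lwc_in_prob_def by blast
  show ?thesis
  proof (intro exI[of _ "\<integral>x. f x \<partial>\<mu>ext"] allI impI)
    fix \<epsilon> :: real assume eps: "\<epsilon> > 0"
    define vb where "vb = (\<integral>x. f x \<partial>\<mu>ext)"
    define c where "c = \<epsilon>\<^sup>2 / (2 * (real Smax + 1)\<^sup>2)"
    have c: "c > 0" using eps unfolding c_def by (simp add: add_pos_pos)
    define B where "B = (\<lambda>n. {E. \<bar>(\<Sum>v<n. mexp Md (deg E v)) / real n - vb\<bar> > \<epsilon>/2})"
    have A: "(\<lambda>n. measure_pmf.prob (Gext n) (B n)) \<longlonglongrightarrow> 0"
      using L[rule_format, of "\<epsilon>/2"] eps unfolding B_def vb_def f_def by simp
    have up: "(\<lambda>n. 2 * exp (- (c * real n)) + measure_pmf.prob (Gext n) (B n)) \<longlonglongrightarrow> 0"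
      using tendsto_add_zero[OF exp_lim[OF c] A] .
    have ev: "eventually (\<lambda>n. measure_pmf.prob (motif_law Gext Md n)
              {(E, m). \<bar>(\<Sum>i<n. real (motif_v (m i))) / real n - vb\<bar> > \<epsilon>}
            \<le> 2 * exp (- (c * real n)) + measure_pmf.prob (Gext n) (B n)) sequentially"
    proof (rule eventually_sequentiallyI[of 1])
      fix n :: nat assume "1 \<le> n"
      then have n: "n > 0" by simp
      show "measure_pmf.prob (motif_law Gext Md n)
              {(E, m). \<bar>(\<Sum>i<n. real (motif_v (m i))) / real n - vb\<bar> > \<epsilon>}
            \<le> 2 * exp (- (c * real n)) + measure_pmf.prob (Gext n) (B n)"
        unfolding motif_law_def
      proof (rule bind_bound)
        fix E
        show "measure_pmf.prob (map_pmf (\<lambda>m. (E, m)) (Pi_pmf {..<n} undefined (\<lambda>i. Md (deg E i))))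
           {(E, m). \<bar>(\<Sum>i<n. real (motif_v (m i))) / real n - vb\<bar> > \<epsilon>}
           \<le> 2 * exp (- (c * real n)) + indicator (B n) E"
          unfolding c_def B_def by (rule per_E[OF internal_reg n eps])
      qed simp
    qed
    have lo: "eventually (\<lambda>n. 0 \<le> measure_pmf.prob (motif_law Gext Md n)
              {(E, m). \<bar>(\<Sum>i<n. real (motif_v (m i))) / real n - vb\<bar> > \<epsilon>}) sequentially"
      by simp
    show "(\<lambda>n. measure_pmf.prob (motif_law Gext Md n)
              {(E, m). \<bar>(\<Sum>i<n. real (motif_v (m i))) / real n - (\<integral>x. f x \<partial>\<mu>ext)\<bar> > \<epsilon>}) \<longlonglongrightarrow> 0"
      using tendsto_sandwich[OF lo ev tendsto_const up] unfolding vb_def .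
  qed
qed


end
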